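(* Let $D$ be a locatable digraph of order $n$ with $\gamma_{OL}(D)=n$. Then $\mathcal{H}(D)$ is a disjoint union of rooted directed trees, such that for each root $r$ of one of these trees, $f^-(r)$ is domination-forced in $D$ (and thus $r$ has only one in-neighbour in $D$), and for each other vertex $v$, $f^-(v)$ is location-forced in $D$ (and $v$ has an in-neighbour in $\mathcal{H}(D)$).
   Context: Digraphs are finite and may contain loops; between two distinct vertices there may be arcs in one or both directions, no repeated arcs. $N^-(v)=\{u: uv\text{ is an arc}\}$ (contains $v$ iff $v$ has a loop). An OLD set of $D$ is a set $S\subseteq V(D)$ such that every vertex has an in-neighbour in $S$ and for every two distinct vertices $u,w$ some vertex of $S$ lies in exactly one of $N^-(u),N^-(w)$. $D$ is locatable if it has an OLD set, and then $\gamma_{OL}(D)$ is the minimum size of an OLD set. A vertex $v$ is domination-forced if some vertex $w$ has $N^-(w)=\{v\}$; it is location-forced if there are distinct vertices $x,y$ with $N^-(x)\ominus N^-(y)=\{v\}$ ($\ominus$ = symmetric difference). An arc $xy$ (possibly a loop) is forcing if $N^-(y)=\{x\}$ or there is a vertex $z$ with $N^-(z)=N^-(y)\setminus\{x\}$. In a locatable digraph $D$ of order $n$ with $\gamma_{OL}(D)=n$, every vertex $v$ is the head of exactly one forcing arc; $f^-(v)$ denotes its tail (so $f^-(v)=v$ if $v$ has a forcing loop). $\mathcal{H}(D)$ is the digraph on vertex set $V(D)$ with an arc from $x$ to $y$ if and only if there exists a location-forced vertex $v$ of $D$ with $N^-(x)=N^-(y)\setminus\{v\}$. A rooted directed tree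 is a digraph without loops and directed 2-cycles whose underlying undirected graph is a tree, with a single source (the root) and every arc oriented away from the root; a single vertex is allowed. *)

theory Defs
  imports Main
begin

text \<open>A digraph is given by a finite vertex set V and an arc set A \<subseteq> V \<times> V
  (loops allowed, (x,y) is the arc from x to y).\<close>

definition digraph :: "'a set \<Rightarrow> ('a \<times> 'a) set \<Rightarrow> bool" where
  "digraph V A \<longleftrightarrow> finite V \<and> A \<subseteq> V \<times> V"

definition inN :: "'a set \<Rightarrow> ('a \<times> 'a) set \<Rightarrow> 'a \<Rightarrow> 'a set" where
  "inN V A v = {u \<in> V. (u, v) \<in> A}"

definition symdiff :: "'a set \<Rightarrow> 'a set \<Rightarrow> 'a set" where
  "symdiff X Y = (X - Y) \<union> (Y - X)"

definition is_OLD :: "'a set \<Rightarrow> ('a \<times> 'a) set \<Rightarrow> 'a set \<Rightarrow> bool" where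
  "is_OLD V A S \<longleftrightarrow> S \<subseteq> V
     \<and> (\<forall>v\<in>V. inN V A v \<inter> S \<noteq> {})
     \<and> (\<forall>u\<in>V. \<forall>w\<in>V. u \<noteq> w \<longrightarrow> symdiff (inN V A u) (inN V A w) \<inter> S \<noteq> {})"

definition locatable :: "'a set \<Rightarrow> ('a \<times> 'a) set \<Rightarrow> bool" where
  "locatable V A \<longleftrightarrow> (\<exists>S. is_OLD V A S)"

definition gamma_OL :: "'a set \<Rightarrow> ('a \<times> 'a) set \<Rightarrow> nat" where
  "gamma_OL V A = (LEAST k. \<exists>S. is_OLD V A S \<and> card S = k)"

definition dom_forced :: "'a set \<Rightarrow> ('a \<times> 'a) set \<Rightarrow> 'a \<Rightarrow> bool" where
  "dom_forced V A v \<longleftrightarrow> v \<in> V \<and> (\<exists>w\<in>V. inN V A w = {v})"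

definition loc_forced :: "'a set \<Rightarrow> ('a \<times> 'a) set \<Rightarrow> 'a \<Rightarrow> bool" where
  "loc_forced V A v \<longleftrightarrow> v \<in> V \<and>
     (\<exists>x\<in>V. \<exists>y\<in>V. x \<noteq> y \<and> symdiff (inN V A x) (inN V A y) = {v})"

definition forcing_arc :: "'a set \<Rightarrow> ('a \<times> 'a) set \<Rightarrow> 'a \<Rightarrow> 'a \<Rightarrow> bool" where
  "forcing_arc V A x y \<longleftrightarrow> (x, y) \<in> A \<and>
     (inN V A y = {x} \<or> (\<exists>z\<in>V. inN V A z = inN V A y - {x}))"

text \<open>Tail of the (unique, when gamma_OL = n) forcing arc with head v.\<close>
definition fminus :: "'a set \<Rightarrow> ('a \<times> 'a) set \<Rightarrow> 'a \<Rightarrow> 'a" where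
  "fminus V A v = (THE x. forcing_arc V A x v)"

definition H_arcs :: "'a set \<Rightarrow> ('a \<times> 'a) set \<Rightarrow> ('a \<times> 'a) set" where
  "H_arcs V A = {(x, y). x \<in> V \<and> y \<in> V \<and>
     (\<exists>v. loc_forced V A v \<and> v \<in> inN V A y \<and> inN V A x = inN V A y - {v})}"

definition rooted_dtree :: "'a set \<Rightarrow> ('a \<times> 'a) set \<Rightarrow> 'a \<Rightarrow> bool" where
  "rooted_dtree W E r \<longleftrightarrow> finite W \<and> E \<subseteq> W \<times> W \<and> r \<in> W
     \<and> (\<forall>x. (x, x) \<notin> E)
     \<and> (\<forall>x y. (x, y) \<in> E \<longrightarrow> (y, x) \<notin> E)
     \<and> (\<forall>x\<in>W. \<forall>y\<in>W. (x, y) \<in> (E \<union> E\<inverse>)\<^sup>*)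
     \<and> card E = card W - 1
     \<and> {v \<in> W. \<not> (\<exists>u. (u, v) \<in> E)} = {r}
     \<and> (\<forall>v\<in>W. (r, v) \<in> E\<^sup>*)"

end

theory Submission
  imports Defs
begin


definition edg :: "'a set set \<Rightarrow> 'a \<Rightarrow> 'a set set" where
  "edg K u = {S \<in> K. u \<notin> S \<and> insert u S \<in> K}"
definition labs :: "'a set set \<Rightarrow> 'a set" where
  "labs K = {u. edg K u \<noteq> {}}"

lemma proj_card:
  assumes "finite K"
  shows "card K = card ((\<lambda>S. S - {u}) ` K) + card (edg K u)"
proof -
  define K0 where "K0 = {S\<in>K. u\<notin>S}"
  define K1 where "K1 = {S\<in>K. u\<in>S}"
  define K1' where "K1' = (\<lambda>S. S - {u}) ` K1"
  have fin: "finite K0" "finite K1" "finite K1'" using assms by (auto simp: K0_def K1_def K1'_def)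
  have img: "(\<lambda>S. S - {u}) ` K = K0 \<union> K1'"
  proof
    show "(\<lambda>S. S - {u}) ` K \<subseteq> K0 \<union> K1'"
    proof
      fix T assume "T \<in> (\<lambda>S. S - {u}) ` K"
      then obtain S where S: "S \<in> K" "T = S - {u}" by auto
      show "T \<in> K0 \<union> K1'"
      proof (cases "u \<in> S")
        case True thus ?thesis using S unfolding K1'_def K1_def by auto
      next
        case False thus ?thesis using S unfolding K0_def by auto
      qed
    qed
    show "K0 \<union> K1' \<subseteq> (\<lambda>S. S - {u}) ` K"
    proof
      fix T assume "T \<in> K0 \<union> K1'"
      thus "T \<in> (\<lambda>S. S - {u}) ` K"
      proof
        assume "T \<in> K0" thus ?thesis unfolding K0_def by (auto intro!: image_eqI[of _ _ T])
      next
        assume "T \<in> K1'" thus ?thesis unfolding K1'_def K1_def by auto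
      qed
    qed
  qed
  have "inj_on (\<lambda>S. S - {u}) K1" unfolding K1_def inj_on_def
    by (metis insert_Diff mem_Collect_eq)
  hence c1: "card K1' = card K1" unfolding K1'_def by (rule card_image)
  have int: "K0 \<inter> K1' = edg K u"
  proof
    show "K0 \<inter> K1' \<subseteq> edg K u"
    proof
      fix T assume "T \<in> K0 \<inter> K1'"
      then obtain S where "T \<in> K" "u \<notin> T" "S \<in> K" "u \<in> S" "T = S - {u}"
        unfolding K0_def K1'_def K1_def by auto
      thus "T \<in> edg K u" unfolding edg_def by (simp add: insert_absorb)
    qed
    show "edg K u \<subseteq> K0 \<inter> K1'"
    proof
      fix T assume "T \<in> edg K u"
      hence T: "T \<in> K" "u \<notin> T" "insert u T \<in> K" unfolding edg_def by auto
      hence "T = insert u T - {u}" by simp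
      thus "T \<in> K0 \<inter> K1'" using T unfolding K0_def K1'_def K1_def by blast
    qed
  qed
  have "K = K0 \<union> K1" "K0 \<inter> K1 = {}" unfolding K0_def K1_def by auto
  hence cK: "card K = card K0 + card K1" using fin card_Un_disjoint by metis
  have "card (K0 \<union> K1') + card (K0 \<inter> K1') = card K0 + card K1'" using fin card_Un_Int by metis
  thus ?thesis using img int c1 cK by simp
qed

lemma labs_proj:
  assumes "u' \<in> labs K" "u' \<noteq> u"
  shows "u' \<in> labs ((\<lambda>S. S - {u}) ` K)"
proof -
  obtain S where S: "S \<in> K" "u' \<notin> S" "insert u' S \<in> K" using assms unfolding labs_def edg_def by auto
  have "S - {u} \<in> (\<lambda>S. S - {u}) ` K" using S by auto
  moreover have "insert u' (S - {u}) \<in> (\<lambda>S. S - {u}) ` K"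
    using S assms(2) by (auto simp: image_iff intro!: bexI[of _ "insert u' S"])
  ultimately show ?thesis using S unfolding labs_def edg_def by auto
qed

lemma labs_sub: "K \<subseteq> Pow V \<Longrightarrow> labs K \<subseteq> V"
  unfolding labs_def edg_def by auto

lemma count_lemma:
  assumes "finite V" "K \<subseteq> Pow V" "K \<noteq> {}"
  shows "card (labs K) < card K"
  using assms(2,3)
proof (induction "card K" arbitrary: K rule: less_induct)
  case less
  have finK: "finite K" using less.prems assms(1) by (meson finite_Pow_iff finite_subset)
  show ?case
  proof (cases "labs K = {}")
    case True
    then show ?thesis using finK less.prems by (simp add: card_gt_0_iff)
  next
    case False
    then obtain u where u: "u \<in> labs K" by auto
    define K' where "K' = (\<lambda>S. S - {u}) ` K"
    have ce: "card K = card K' + card (edg K u)" using proj_card[OF finK] K'_def by simp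
    have "edg K u \<noteq> {}" using u unfolding labs_def by auto
    moreover have "finite (edg K u)" unfolding edg_def using finK by auto
    ultimately have "card (edg K u) > 0" by (simp add: card_gt_0_iff)
    hence lt: "card K' < card K" using ce by simp
    have K'sub: "K' \<subseteq> Pow V" using less.prems K'_def by auto
    have K'ne: "K' \<noteq> {}" using less.prems K'_def by auto
    have IH: "card (labs K') < card K'" using less.hyps[OF lt K'sub K'ne] .
    have "labs K - {u} \<subseteq> labs K'" unfolding K'_def using labs_proj[of _ K u] by (simp add: subset_iff)
    moreover have "finite (labs K')" using finite_subset[OF labs_sub[OF K'sub] assms(1)] .
    ultimately have "card (labs K - {u}) \<le> card (labs K')" by (simp add: card_mono)
    moreover have "card (labs K) = card (labs K - {u}) + 1"
    proof -
      have "finite (labs K)" using finite_subset[OF labs_sub[OF less.prems(1)] assms(1)] .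
      moreover have "card (labs K) > 0" using calculation u card_gt_0_iff by blast
      ultimately show ?thesis using u by (simp add: card_Diff_singleton)
    qed
    ultimately show ?thesis using IH ce \<open>card (edg K u) > 0\<close> by linarith
  qed
qed

lemma count_edge:
  assumes "finite V" "K \<subseteq> Pow V" "u \<in> labs K"
  shows "card (labs K) + card (edg K u) \<le> card K"
proof -
  have finK: "finite K" using assms by (meson finite_Pow_iff finite_subset)
  define K' where "K' = (\<lambda>S. S - {u}) ` K"
  have ce: "card K = card K' + card (edg K u)" using proj_card[OF finK] K'_def by simp
  have K'sub: "K' \<subseteq> Pow V" using assms K'_def by auto
  have K'ne: "K' \<noteq> {}" using assms(3) unfolding K'_def labs_def edg_def by auto
  have IH: "card (labs K') < card K'" using count_lemma[OF assms(1) K'sub K'ne] .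
  have "labs K - {u} \<subseteq> labs K'" unfolding K'_def using labs_proj[of _ K u] by (simp add: subset_iff)
  moreover have "finite (labs K')" using finite_subset[OF labs_sub[OF K'sub] assms(1)] .
  ultimately have "card (labs K - {u}) \<le> card (labs K')" by (simp add: card_mono)
  moreover have "card (labs K) = card (labs K - {u}) + 1"
  proof -
    have "finite (labs K)" using finite_subset[OF labs_sub[OF assms(2)] assms(1)] .
    moreover have "card (labs K) > 0" using calculation assms(3) card_gt_0_iff by blast
    ultimately show ?thesis using assms(3) by (simp add: card_Diff_singleton)
  qed
  ultimately show ?thesis using IH ce by linarith
qed

inductive reach :: "'a set set \<Rightarrow> 'a set \<Rightarrow> bool" for F where
  r0: "reach F {}"
| rs: "reach F S \<Longrightarrow> x \<notin> S \<Longrightarrow> insert x S \<in> F \<Longrightarrow> reach F (insert x S)"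

lemma reach_in: "reach F S \<Longrightarrow> {} \<in> F \<Longrightarrow> S \<in> F"
  by (induction rule: reach.induct) auto

lemma reach_edge: "reach F S \<Longrightarrow> x \<in> S \<Longrightarrow> \<exists>B. reach F B \<and> x \<notin> B \<and> insert x B \<in> F"
proof (induction rule: reach.induct)
  case r0 thus ?case by simp
next
  case (rs S y)
  show ?case
  proof (cases "x = y")
    case True thus ?thesis using rs by blast
  next
    case False thus ?thesis using rs by blast
  qed
qed



locale setting =
  fixes V :: "'a set" and A :: "('a \<times> 'a) set"
  assumes finV: "finite V" and subA: "A \<subseteq> V \<times> V"
  and Nne: "\<And>v. v \<in> V \<Longrightarrow> inN V A v \<noteq> {}"
  and Ninj: "inj_on (inN V A) V"
  and lab: "\<And>x. x \<in> V \<Longrightarrow> \<exists>S \<in> inN V A ` V \<union> {{}}. x \<notin> S \<and> insert x S \<in> inN V A ` V \<union> {{}}"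
begin

abbreviation N where "N \<equiv> inN V A"
definition F where "F = N ` V \<union> {{}}"

lemma N_sub: "N v \<subseteq> V" unfolding inN_def by auto

lemma F_sub: "F \<subseteq> Pow V" unfolding F_def using N_sub by auto

lemma finF: "finite F" unfolding F_def using finV by auto

lemma cardF: "card F = card V + 1"
proof -
  have "{} \<notin> N ` V" using Nne by auto
  hence "card F = card (N ` V) + 1" unfolding F_def using finV by simp
  thus ?thesis using card_image[OF Ninj] by simp
qed

lemma labsF: "labs F = V"
proof
  show "labs F \<subseteq> V" using labs_sub[OF F_sub] .
  show "V \<subseteq> labs F"
  proof
    fix x assume "x \<in> V"
    have "\<exists>S \<in> F. x \<notin> S \<and> insert x S \<in> F" using lab[OF \<open>x \<in> V\<close>] unfolding F_def .
    then obtain S where "S \<in> F" "x \<notin> S" "insert x S \<in> F" by blast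
    thus "x \<in> labs F" unfolding labs_def edg_def by auto
  qed
qed

lemma edge_unique:
  assumes "S \<in> edg F x" "S' \<in> edg F x"
  shows "S = S'"
proof -
  have x: "x \<in> labs F" using assms(1) unfolding labs_def by auto
  have "card (labs F) + card (edg F x) \<le> card F" using count_edge[OF finV F_sub x] .
  hence "card (edg F x) \<le> Suc 0" using labsF cardF by simp
  moreover have "finite (edg F x)" unfolding edg_def using finF by simp
  ultimately have "\<forall>a\<in>edg F x. \<forall>b\<in>edg F x. a = b" using card_le_Suc0_iff_eq by blast
  thus ?thesis using assms by blast
qed

lemma empty_F: "{} \<in> F" unfolding F_def by simp

lemma all_reach:
  assumes "T \<in> F" shows "reach F T"
proof (rule ccontr)
  assume nr: "\<not> reach F T"
  define K1 where "K1 = {S \<in> F. reach F S}"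
  define K2 where "K2 = {S \<in> F. \<not> reach F S}"
  have K1ne: "K1 \<noteq> {}" unfolding K1_def using empty_F reach.r0 by blast
  have K2ne: "K2 \<noteq> {}" unfolding K2_def using nr assms by blast
  have K1s: "K1 \<subseteq> Pow V" "K2 \<subseteq> Pow V" unfolding K1_def K2_def using F_sub by auto
  have c1: "card (labs K1) < card K1" using count_lemma[OF finV K1s(1) K1ne] .
  have c2: "card (labs K2) < card K2" using count_lemma[OF finV K1s(2) K2ne] .
  have "F = K1 \<union> K2" "K1 \<inter> K2 = {}" unfolding K1_def K2_def by auto
  hence cF: "card F = card K1 + card K2" using finF by (metis card_Un_disjoint finite_Un)
  have "labs F \<subseteq> labs K1 \<union> labs K2"
  proof
    fix x assume "x \<in> labs F"
    then obtain S where S: "S \<in> edg F x" unfolding labs_def by auto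
    hence S': "S \<in> F" "x \<notin> S" "insert x S \<in> F" unfolding edg_def by auto
    show "x \<in> labs K1 \<union> labs K2"
    proof (cases "reach F S")
      case True
      have "reach F (insert x S)" using reach.rs[OF True S'(2) S'(3)] .
      hence "S \<in> edg K1 x" using True S' unfolding edg_def K1_def by auto
      thus ?thesis unfolding labs_def by auto
    next
      case False
      have "\<not> reach F (insert x S)"
      proof
        assume rx: "reach F (insert x S)"
        have "\<exists>B. reach F B \<and> x \<notin> B \<and> insert x B \<in> F" using reach_edge[OF rx insertI1] .
        then obtain B where B: "reach F B" "x \<notin> B" "insert x B \<in> F" by blast
        have "B \<in> F" using reach_in[OF B(1) empty_F] .
        hence "B \<in> edg F x" using B unfolding edg_def by auto
        hence "B = S" using edge_unique[OF _ S] by simp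
        thus False using B False by simp
      qed
      hence "S \<in> edg K2 x" using False S' unfolding edg_def K2_def by auto
      thus ?thesis unfolding labs_def by auto
    qed
  qed
  moreover have "finite (labs K1)" "finite (labs K2)"
    using finite_subset[OF labs_sub[OF K1s(1)] finV] finite_subset[OF labs_sub[OF K1s(2)] finV] by auto
  ultimately have "card (labs F) \<le> card (labs K1) + card (labs K2)"
    by (meson card_Un_le card_mono finite_UnI le_trans)
  hence "card V \<le> card (labs K1) + card (labs K2)" using labsF by simp
  thus False using c1 c2 cF cardF by linarith
qed

definition lo where "lo x = (THE S. S \<in> edg F x)"
definition g where "g x = insert x (lo x)"

lemma lo_in: assumes "x \<in> V" shows "lo x \<in> edg F x"
proof -
  have "x \<in> labs F" using labsF assms by simp
  then obtain S where "S \<in> edg F x" unfolding labs_def by auto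
  thus ?thesis unfolding lo_def using edge_unique by (metis theI)
qed

lemma g_img: "g ` V = F - {{}}"
proof
  show "g ` V \<subseteq> F - {{}}" using lo_in unfolding g_def edg_def by auto
  show "F - {{}} \<subseteq> g ` V"
  proof
    fix T assume T: "T \<in> F - {{}}"
    have "reach F T" using all_reach T by auto
    then obtain S x where Sx: "reach F S" "x \<notin> S" "insert x S \<in> F" "T = insert x S"
    proof (cases rule: reach.cases)
      case r0 thus ?thesis using T by simp
    next
      case (rs S x) thus ?thesis using that by blast
    qed
    have "S \<in> edg F x" using Sx reach_in[OF Sx(1) empty_F] unfolding edg_def by auto
    moreover have "x \<in> V" using Sx(3) F_sub by auto
    ultimately have "lo x = S" using lo_in edge_unique by blast
    thus "T \<in> g ` V" using Sx \<open>x \<in> V\<close> unfolding g_def by auto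
  qed
qed

lemma g_inj: "inj_on g V"
proof -
  have "card (F - {{}}) = card V" using cardF finF empty_F by simp
  thus ?thesis using g_img finV by (intro eq_card_imp_inj_on) auto
qed

lemma main_unique:
  assumes "y \<in> V" shows "\<exists>!x. x \<in> N y \<and> N y - {x} \<in> F"
proof -
  have "N y \<in> F - {{}}" using assms Nne unfolding F_def by auto
  then obtain x where x: "x \<in> V" "g x = N y" using g_img by (metis imageE)
  have lx: "lo x \<in> edg F x" using lo_in x by simp
  hence "x \<notin> lo x" unfolding edg_def by auto
  hence e: "N y - {x} = lo x" using x unfolding g_def by auto
  have ex: "x \<in> N y \<and> N y - {x} \<in> F" using x lx e unfolding g_def edg_def by auto
  show ?thesis
  proof (rule ex1I[of _ x])
    show "x \<in> N y \<and> N y - {x} \<in> F" using ex .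
  next
    fix x' assume x': "x' \<in> N y \<and> N y - {x'} \<in> F"
    hence "x' \<in> V" using N_sub by auto
    have "insert x' (N y - {x'}) = N y" using x' by auto
    hence "N y - {x'} \<in> edg F x'" using x' \<open>N y \<in> F - {{}}\<close> unfolding edg_def by auto
    hence "lo x' = N y - {x'}" using lo_in[OF \<open>x' \<in> V\<close>] edge_unique by blast
    hence "g x' = N y" using x' unfolding g_def by auto
    thus "x' = x" using g_inj x \<open>x' \<in> V\<close> by (metis inj_onD)
  qed
qed

end


context setting begin

abbreviation H where "H \<equiv> H_arcs V A"
definition p where "p y = fminus V A y"

lemma inA_iff: "(x, y) \<in> A \<longleftrightarrow> x \<in> N y \<and> y \<in> V"
  unfolding inN_def using subA by auto

lemma fa_iff:
  assumes "y \<in> V"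
  shows "forcing_arc V A x y \<longleftrightarrow> x \<in> N y \<and> N y - {x} \<in> F"
proof
  assume fa: "forcing_arc V A x y"
  hence x: "x \<in> N y" unfolding forcing_arc_def using inA_iff by blast
  have "N y = {x} \<or> (\<exists>z\<in>V. N z = N y - {x})" using fa unfolding forcing_arc_def by blast
  thus "x \<in> N y \<and> N y - {x} \<in> F"
  proof
    assume "N y = {x}" thus ?thesis using x unfolding F_def by auto
  next
    assume "\<exists>z\<in>V. N z = N y - {x}" thus ?thesis using x unfolding F_def by auto
  qed
next
  assume h: "x \<in> N y \<and> N y - {x} \<in> F"
  hence "(x, y) \<in> A" using inA_iff assms by blast
  moreover have "N y = {x} \<or> (\<exists>z\<in>V. N z = N y - {x})"
  proof (cases "N y - {x} = {}")
    case True thus ?thesis using h by auto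
  next
    case False thus ?thesis using h unfolding F_def by auto
  qed
  ultimately show "forcing_arc V A x y" unfolding forcing_arc_def by blast
qed

lemma p_prop:
  assumes "y \<in> V" shows "p y \<in> N y" "N y - {p y} \<in> F"
proof -
  have "\<exists>!x. forcing_arc V A x y" using main_unique[OF assms] fa_iff[OF assms] by simp
  hence "forcing_arc V A (p y) y" unfolding p_def fminus_def by (rule theI')
  thus "p y \<in> N y" "N y - {p y} \<in> F" using fa_iff[OF assms] by auto
qed

lemma p_uniq:
  assumes "y \<in> V" "x \<in> N y" "N y - {x} \<in> F" shows "x = p y"
  using main_unique[OF assms(1)] assms p_prop[OF assms(1)] by blast

lemma H_iff: "(a, b) \<in> H \<longleftrightarrow> a \<in> V \<and> b \<in> V \<and> N a = N b - {p b}"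
proof
  assume "(a, b) \<in> H"
  then obtain v where v: "a \<in> V" "b \<in> V" "v \<in> N b" "N a = N b - {v}"
    unfolding H_arcs_def by blast
  hence "N b - {v} \<in> F" unfolding F_def by auto
  hence "v = p b" using p_uniq v by blast
  thus "a \<in> V \<and> b \<in> V \<and> N a = N b - {p b}" using v by simp
next
  assume h: "a \<in> V \<and> b \<in> V \<and> N a = N b - {p b}"
  have pb: "p b \<in> N b" using p_prop h by blast
  hence ab: "a \<noteq> b" using h by auto
  have sd: "symdiff (N a) (N b) = {p b}" using h pb unfolding symdiff_def by auto
  have "p b \<in> V" using pb N_sub by auto
  hence "loc_forced V A (p b)" unfolding loc_forced_def using h ab sd by blast
  thus "(a, b) \<in> H" unfolding H_arcs_def using h pb by blast
qed

definition isroot where "isroot y \<longleftrightarrow> y \<in> V \<and> N y - {p y} = {}"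
definition par where "par y = (THE a. a \<in> V \<and> N a = N y - {p y})"

lemma par:
  assumes "y \<in> V" "\<not> isroot y" shows "par y \<in> V" "N (par y) = N y - {p y}"
proof -
  have "N y - {p y} \<in> N ` V" using p_prop[OF assms(1)] assms unfolding isroot_def F_def by auto
  then obtain a where a: "a \<in> V" "N a = N y - {p y}" by auto
  have "\<exists>!a. a \<in> V \<and> N a = N y - {p y}"
    using a Ninj unfolding inj_on_def by metis
  hence "par y \<in> V \<and> N (par y) = N y - {p y}" unfolding par_def by (rule theI')
  thus "par y \<in> V" "N (par y) = N y - {p y}" by auto
qed

lemma H_par: "y \<in> V \<Longrightarrow> \<not> isroot y \<Longrightarrow> (par y, y) \<in> H"
  using H_iff par by blast

lemma H_V: "(a, b) \<in> H \<Longrightarrow> a \<in> V \<and> b \<in> V"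
  using H_iff by blast

lemma H_into:
  assumes "(a, y) \<in> H" shows "\<not> isroot y" "a = par y"
proof -
  have h: "a \<in> V" "y \<in> V" "N a = N y - {p y}" using H_iff assms by auto
  thus nr: "\<not> isroot y" using Nne unfolding isroot_def by auto
  have "N a = N (par y)" using par[OF h(2) nr] h by simp
  thus "a = par y" using Ninj h(1) par[OF h(2) nr] unfolding inj_on_def by blast
qed

lemma H_card:
  assumes "(a, b) \<in> H" shows "card (N a) < card (N b)"
proof -
  have h: "a \<in> V" "b \<in> V" "N a = N b - {p b}" using H_iff assms by auto
  have "finite (N b)" using N_sub finV finite_subset by blast
  moreover have "p b \<in> N b" using p_prop h by blast
  ultimately show ?thesis using h(3) card_Diff1_less by metis
qed

lemma root_ex:
  assumes "y \<in> V" shows "\<exists>r. isroot r \<and> (r, y) \<in> H\<^sup>*"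
  using assms
proof (induction "card (N y)" arbitrary: y rule: less_induct)
  case less
  show ?case
  proof (cases "isroot y")
    case True thus ?thesis by blast
  next
    case False
    have hp: "(par y, y) \<in> H" using H_par less.prems False by blast
    have "card (N (par y)) < card (N y)" using H_card[OF hp] .
    then obtain r where "isroot r" "(r, par y) \<in> H\<^sup>*" using less.hyps par less.prems False by blast
    thus ?thesis using hp by (meson rtrancl.rtrancl_into_rtrancl)
  qed
qed

lemma root_in:
  assumes "isroot r" "(x, r) \<in> H\<^sup>*" shows "x = r"
  using assms(2)
proof (cases rule: rtranclE)
  case base thus ?thesis by simp
next
  case (step z) thus ?thesis using H_into(1) assms(1) by blast
qed

lemma root_uniq:
  assumes "(a, y) \<in> H\<^sup>*" "(b, y) \<in> H\<^sup>*" "isroot a" "isroot b"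
  shows "a = b"
  using assms
proof (induction "card (N y)" arbitrary: y rule: less_induct)
  case less
  show ?case
  proof (cases "a = y")
    case True thus ?thesis using root_in less.prems by blast
  next
    case False
    then obtain z where z: "(a, z) \<in> H\<^sup>*" "(z, y) \<in> H" using less.prems(1) by (meson rtranclE)
    have "b \<noteq> y" using root_in less.prems False by blast
    then obtain z' where z': "(b, z') \<in> H\<^sup>*" "(z', y) \<in> H" using less.prems(2) by (meson rtranclE)
    have "z = z'" using H_into(2) z z' by blast
    moreover have "card (N z) < card (N y)" using H_card z by blast
    ultimately show ?thesis using less.hyps z z' less.prems by blast
  qed
qed

lemma isroot_V: "isroot r \<Longrightarrow> r \<in> V" unfolding isroot_def by simp

definition Wr where "Wr r = {v. (r, v) \<in> H\<^sup>*}"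

lemma Wr_sub: assumes "r \<in> V" shows "Wr r \<subseteq> V"
proof
  fix v assume "v \<in> Wr r"
  hence "(r, v) \<in> H\<^sup>*" unfolding Wr_def by simp
  thus "v \<in> V"
  proof (cases rule: rtranclE)
    case base thus ?thesis using assms by simp
  next
    case (step z) thus ?thesis using H_V by blast
  qed
qed

lemma root_of:
  assumes "isroot r" shows "(SOME r'. isroot r' \<and> Wr r = Wr r') = r"
proof -
  define r' where "r' = (SOME r'. isroot r' \<and> Wr r = Wr r')"
  have "\<exists>r'. isroot r' \<and> Wr r = Wr r'" using assms by blast
  hence s: "isroot r' \<and> Wr r = Wr r'" unfolding r'_def by (rule someI_ex)
  have "r' \<in> Wr r'" unfolding Wr_def by simp
  hence "r' \<in> Wr r" using s by simp
  hence "(r, r') \<in> H\<^sup>*" unfolding Wr_def by simp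
  hence "r = r'" using root_in s by blast
  thus ?thesis unfolding r'_def by simp
qed

end


context setting begin

lemma nonroot_W:
  assumes "isroot r" "v \<in> Wr r" "v \<noteq> r"
  shows "\<not> isroot v" "v \<in> V" "par v \<in> Wr r" "(par v, v) \<in> H"
proof -
  have rv: "(r, v) \<in> H\<^sup>*" using assms unfolding Wr_def by simp
  show nr: "\<not> isroot v" using root_uniq[OF rv _ assms(1)] assms(3) by blast
  show vV: "v \<in> V" using Wr_sub[OF isroot_V[OF assms(1)]] assms(2) by blast
  obtain z where z: "(r, z) \<in> H\<^sup>*" "(z, v) \<in> H" using rtranclE[OF rv] assms(3) by metis
  have "z = par v" using H_into(2)[OF z(2)] .
  thus "par v \<in> Wr r" using z unfolding Wr_def by simp
  show "(par v, v) \<in> H" using H_par vV nr by blast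
qed

lemma reachE:
  assumes "(r, v) \<in> H\<^sup>*"
  shows "(r, v) \<in> (H \<inter> (Wr r \<times> Wr r))\<^sup>*"
  using assms
proof (induction rule: rtrancl_induct)
  case base thus ?case by simp
next
  case (step y z)
  have "(r, z) \<in> H\<^sup>*" using step by (meson rtrancl.rtrancl_into_rtrancl)
  hence "(y, z) \<in> H \<inter> (Wr r \<times> Wr r)" using step unfolding Wr_def by simp
  thus ?case using step.IH by (meson rtrancl.rtrancl_into_rtrancl)
qed

lemma tree:
  assumes r: "isroot r"
  shows "rooted_dtree (Wr r) (H \<inter> (Wr r \<times> Wr r)) r"
proof -
  define W where "W = Wr r"
  define E where "E = H \<inter> (W \<times> W)"
  have rV: "r \<in> V" using isroot_V r .
  have WV: "W \<subseteq> V" using Wr_sub[OF rV] W_def by simp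
  have finW: "finite W" using WV finV finite_subset by blast
  have rW: "r \<in> W" unfolding W_def Wr_def by simp
  have noloop: "\<forall>x. (x, x) \<notin> E" unfolding E_def using H_card by blast
  have noanti: "\<forall>x y. (x, y) \<in> E \<longrightarrow> (y, x) \<notin> E" unfolding E_def using H_card
    by (meson Int_iff less_asym)
  have reach: "\<forall>v\<in>W. (r, v) \<in> E\<^sup>*" using reachE unfolding E_def W_def Wr_def by blast
  have conn: "\<forall>x\<in>W. \<forall>y\<in>W. (x, y) \<in> (E \<union> E\<inverse>)\<^sup>*"
  proof (intro ballI)
    fix x y assume "x \<in> W" "y \<in> W"
    hence rx: "(r, x) \<in> E\<^sup>*" and ry: "(r, y) \<in> E\<^sup>*" using reach by auto
    have "(x, r) \<in> (E\<inverse>)\<^sup>*" using rx by (simp add: rtrancl_converseI)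
    hence 1: "(x, r) \<in> (E \<union> E\<inverse>)\<^sup>*" by (meson Un_upper2 rtrancl_mono subsetD)
    have 2: "(r, y) \<in> (E \<union> E\<inverse>)\<^sup>*" using ry by (meson Un_upper1 rtrancl_mono subsetD)
    show "(x, y) \<in> (E \<union> E\<inverse>)\<^sup>*" using 1 2 by (rule rtrancl_trans)
  qed
  have rnoin: "\<And>u. (u, r) \<notin> H" using H_into(1) r by blast
  have Eimg: "E = (\<lambda>y. (par y, y)) ` (W - {r})"
  proof
    show "E \<subseteq> (\<lambda>y. (par y, y)) ` (W - {r})"
    proof
      fix e assume "e \<in> E"
      then obtain a b where e: "e = (a, b)" "(a, b) \<in> H" "a \<in> W" "b \<in> W" unfolding E_def by auto
      have "b \<noteq> r" using rnoin e by blast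
      moreover have "a = par b" using H_into(2) e by blast
      ultimately show "e \<in> (\<lambda>y. (par y, y)) ` (W - {r})" using e by auto
    qed
    show "(\<lambda>y. (par y, y)) ` (W - {r}) \<subseteq> E"
    proof
      fix e assume "e \<in> (\<lambda>y. (par y, y)) ` (W - {r})"
      then obtain y where y: "e = (par y, y)" "y \<in> W" "y \<noteq> r" by auto
      show "e \<in> E" using nonroot_W[OF r, of y] y unfolding E_def W_def by auto
    qed
  qed
  have "inj_on (\<lambda>y. (par y, y)) (W - {r})" unfolding inj_on_def by simp
  hence cE: "card E = card W - 1" using Eimg card_image finW rW by (simp add: card_image)
  have src: "{v \<in> W. \<not> (\<exists>u. (u, v) \<in> E)} = {r}"
  proof
    show "{v \<in> W. \<not> (\<exists>u. (u, v) \<in> E)} \<subseteq> {r}"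
    proof
      fix v assume v: "v \<in> {v \<in> W. \<not> (\<exists>u. (u, v) \<in> E)}"
      show "v \<in> {r}"
      proof (rule ccontr)
        assume "v \<notin> {r}"
        hence "(par v, v) \<in> E" using nonroot_W[OF r, of v] v unfolding E_def W_def by auto
        thus False using v by blast
      qed
    qed
    show "{r} \<subseteq> {v \<in> W. \<not> (\<exists>u. (u, v) \<in> E)}" using rW rnoin unfolding E_def by auto
  qed
  have "E \<subseteq> W \<times> W" unfolding E_def by auto
  hence "rooted_dtree W E r" unfolding rooted_dtree_def
    using finW rW noloop noanti conn cE src reach by blast
  thus ?thesis unfolding W_def E_def .
qed

end


lemma setting_from:
  assumes dg: "digraph V A" and loc: "locatable V A" and gam: "gamma_OL V A = card V"
  shows "setting V A"
proof -
  have finV: "finite V" and subA: "A \<subseteq> V \<times> V" using dg unfolding digraph_def by auto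
  obtain S where S: "is_OLD V A S" using loc unfolding locatable_def by blast
  have Nne: "\<And>v. v \<in> V \<Longrightarrow> inN V A v \<noteq> {}" using S unfolding is_OLD_def by blast
  have Ninj: "inj_on (inN V A) V"
  proof (rule inj_onI, rule ccontr)
    fix u w assume "u \<in> V" "w \<in> V" "inN V A u = inN V A w" "u \<noteq> w"
    hence "symdiff (inN V A u) (inN V A w) \<inter> S \<noteq> {}" using S unfolding is_OLD_def by blast
    moreover have "symdiff (inN V A u) (inN V A w) = {}" using \<open>inN V A u = inN V A w\<close>
      unfolding symdiff_def by simp
    ultimately show False by simp
  qed
  have Nsub: "\<And>v. inN V A v \<subseteq> V" unfolding inN_def by auto
  have lab: "\<exists>T \<in> inN V A ` V \<union> {{}}. x \<notin> T \<and> insert x T \<in> inN V A ` V \<union> {{}}" if x: "x \<in> V" for x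
  proof -
    have notOLD: "\<not> is_OLD V A (V - {x})"
    proof
      assume "is_OLD V A (V - {x})"
      hence "gamma_OL V A \<le> card (V - {x})" unfolding gamma_OL_def by (intro Least_le) blast
      moreover have "card (V - {x}) < card V" using finV x by (meson card_Diff1_less)
      ultimately show False using gam by simp
    qed
    hence "(\<exists>v\<in>V. inN V A v \<inter> (V - {x}) = {}) \<or>
           (\<exists>u\<in>V. \<exists>w\<in>V. u \<noteq> w \<and> symdiff (inN V A u) (inN V A w) \<inter> (V - {x}) = {})"
      unfolding is_OLD_def by blast
    thus ?thesis
    proof
      assume "\<exists>v\<in>V. inN V A v \<inter> (V - {x}) = {}"
      then obtain v where v: "v \<in> V" "inN V A v \<inter> (V - {x}) = {}" by blast
      have "inN V A v = {x}" using v Nne[OF v(1)] Nsub[of v] by blast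
      thus ?thesis using v(1) by force
    next
      assume "\<exists>u\<in>V. \<exists>w\<in>V. u \<noteq> w \<and> symdiff (inN V A u) (inN V A w) \<inter> (V - {x}) = {}"
      then obtain u w where uw: "u \<in> V" "w \<in> V" "u \<noteq> w"
        "symdiff (inN V A u) (inN V A w) \<inter> (V - {x}) = {}" by blast
      have ne: "inN V A u \<noteq> inN V A w" using Ninj uw unfolding inj_on_def by blast
      have sd: "inN V A u - inN V A w \<subseteq> {x}" "inN V A w - inN V A u \<subseteq> {x}"
        using uw(4) Nsub[of u] Nsub[of w] unfolding symdiff_def by blast+
      show ?thesis
      proof (cases "x \<in> inN V A w")
        case True
        hence "x \<notin> inN V A u" using sd ne by blast
        hence "inN V A w = insert x (inN V A u)" using sd True by blast
        thus ?thesis using uw \<open>x \<notin> inN V A u\<close> by blast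
      next
        case False
        hence "x \<in> inN V A u" using sd ne by blast
        hence "inN V A u = insert x (inN V A w)" using sd False by blast
        thus ?thesis using uw False by blast
      qed
    qed
  qed
  show ?thesis using finV subA Nne Ninj lab by unfold_locales
qed



theorem theorem17:
  fixes V :: "'a set" and A :: "('a \<times> 'a) set" and n :: nat
  assumes "digraph V A"
    and "card V = n"
    and "locatable V A"
    and "gamma_OL V A = n"
  shows "\<exists>P root.
           (\<forall>W\<in>P. W \<noteq> {} \<and> W \<subseteq> V)
         \<and> (\<forall>v\<in>V. \<exists>!W. W \<in> P \<and> v \<in> W)
         \<and> H_arcs V A \<subseteq> (\<Union>W\<in>P. W \<times> W)
         \<and> (\<forall>W\<in>P. rooted_dtree W (H_arcs V A \<inter> (W \<times> W)) (root W)
               \<and> dom_forced V A (fminus V A (root W))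
               \<and> card (inN V A (root W)) = 1
               \<and> (\<forall>v\<in>W. v \<noteq> root W \<longrightarrow>
                     loc_forced V A (fminus V A v) \<and> (\<exists>u. (u, v) \<in> H_arcs V A)))"
proof -
  interpret S: setting V A using setting_from[OF assms(1) assms(3)] assms(2,4) by simp
  define P where "P = S.Wr ` {r. S.isroot r}"
  define root where "root = (\<lambda>W. SOME r'. S.isroot r' \<and> W = S.Wr r')"
  have rootW: "root (S.Wr r) = r" if "S.isroot r" for r
    using S.root_of[OF that] unfolding root_def by simp
  have inW: "v \<in> S.Wr r \<longleftrightarrow> (r, v) \<in> (H_arcs V A)\<^sup>*" for r v unfolding S.Wr_def by simp
  have c1: "\<forall>W\<in>P. W \<noteq> {} \<and> W \<subseteq> V"
  proof
    fix W assume "W \<in> P"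
    then obtain r where r: "S.isroot r" "W = S.Wr r" unfolding P_def by auto
    have "r \<in> W" using r inW by simp
    thus "W \<noteq> {} \<and> W \<subseteq> V" using S.Wr_sub[OF S.isroot_V[OF r(1)]] r by auto
  qed
  have c2: "\<forall>v\<in>V. \<exists>!W. W \<in> P \<and> v \<in> W"
  proof
    fix v assume v: "v \<in> V"
    obtain r where r: "S.isroot r" "(r, v) \<in> (H_arcs V A)\<^sup>*" using S.root_ex[OF v] by blast
    show "\<exists>!W. W \<in> P \<and> v \<in> W"
    proof (rule ex1I[of _ "S.Wr r"])
      show "S.Wr r \<in> P \<and> v \<in> S.Wr r" using r inW unfolding P_def by auto
    next
      fix W assume W: "W \<in> P \<and> v \<in> W"
      then obtain r' where r': "S.isroot r'" "W = S.Wr r'" unfolding P_def by auto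
      have "(r', v) \<in> (H_arcs V A)\<^sup>*" using W r' inW by simp
      hence "r' = r" using S.root_uniq r r' by blast
      thus "W = S.Wr r" using r' by simp
    qed
  qed
  have c3: "H_arcs V A \<subseteq> (\<Union>W\<in>P. W \<times> W)"
  proof
    fix e assume e: "e \<in> H_arcs V A"
    then obtain a b where ab: "e = (a, b)" "(a, b) \<in> H_arcs V A" by (cases e) auto
    have "a \<in> V" using S.H_V ab by blast
    then obtain r where r: "S.isroot r" "(r, a) \<in> (H_arcs V A)\<^sup>*" using S.root_ex by blast
    have "(r, b) \<in> (H_arcs V A)\<^sup>*" using r ab by (meson rtrancl.rtrancl_into_rtrancl)
    hence "e \<in> S.Wr r \<times> S.Wr r" using r ab inW by simp
    thus "e \<in> (\<Union>W\<in>P. W \<times> W)" using r unfolding P_def by blast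
  qed
  have c4: "\<forall>W\<in>P. rooted_dtree W (H_arcs V A \<inter> (W \<times> W)) (root W)
               \<and> dom_forced V A (fminus V A (root W))
               \<and> card (inN V A (root W)) = 1
               \<and> (\<forall>v\<in>W. v \<noteq> root W \<longrightarrow>
                     loc_forced V A (fminus V A v) \<and> (\<exists>u. (u, v) \<in> H_arcs V A))"
  proof
    fix W assume "W \<in> P"
    then obtain r where r: "S.isroot r" "W = S.Wr r" unfolding P_def by auto
    have rt: "root W = r" using rootW r by simp
    have rV: "r \<in> V" using S.isroot_V r(1) .
    have pr: "S.p r \<in> inN V A r" using S.p_prop[OF rV] by blast
    have Nr: "inN V A r = {S.p r}" using pr r(1) unfolding S.isroot_def by blast
    have d: "dom_forced V A (fminus V A r)"
      unfolding dom_forced_def S.p_def[symmetric] using Nr rV S.N_sub by blast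
    have l: "loc_forced V A (fminus V A v) \<and> (\<exists>u. (u, v) \<in> H_arcs V A)"
      if v: "v \<in> W" "v \<noteq> r" for v
    proof -
      have nr: "\<not> S.isroot v" "v \<in> V" "(S.par v, v) \<in> H_arcs V A"
        using S.nonroot_W[OF r(1), of v] v r(2) by auto
      have pv: "S.p v \<in> inN V A v" using S.p_prop[OF nr(2)] by blast
      have np: "inN V A (S.par v) = inN V A v - {S.p v}" "S.par v \<in> V" using S.par nr by auto
      have "S.p v \<notin> inN V A (S.par v)" using np(1) by blast
      hence neq: "S.par v \<noteq> v" using pv by metis
      have sd: "symdiff (inN V A (S.par v)) (inN V A v) = {S.p v}" using np pv unfolding symdiff_def by auto
      have "S.p v \<in> V" using pv S.N_sub by blast
      hence "loc_forced V A (S.p v)" unfolding loc_forced_def using np(2) nr(2) neq sd by blast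
      thus ?thesis using nr(3) unfolding S.p_def by blast
    qed
    show "rooted_dtree W (H_arcs V A \<inter> (W \<times> W)) (root W)
               \<and> dom_forced V A (fminus V A (root W))
               \<and> card (inN V A (root W)) = 1
               \<and> (\<forall>v\<in>W. v \<noteq> root W \<longrightarrow>
                     loc_forced V A (fminus V A v) \<and> (\<exists>u. (u, v) \<in> H_arcs V A))"
      using S.tree[OF r(1)] r(2) rt d Nr l by simp
  qed
  show ?thesis using c1 c2 c3 c4 by blast
qed


end
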